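(* Every singleton congestion game structure $\mathcal G=(\mathcal R,c,\mathcal S)$ has a monotone equilibrium selection: for each demand vector $\mu\in\mathbb R_+^{\mathcal H}$ one can choose an equilibrium load vector $x(\mu)$ of $(\mathcal G,\mu)$ such that for every resource $r\in\mathcal R$ the map $\mu\mapsto x_r(\mu)$ is nondecreasing with respect to each component $\mu^h$, $h\in\mathcal H$.
   Context: A congestion game structure $\mathcal G=(\mathcal R,c,\mathcal S)$ consists of: a finite set $\mathcal R$ of resources, each $r\in\mathcal R$ with a continuous nondecreasing cost function $c_r:\mathbb R_+\to\mathbb R_+$; and a finite set $\mathcal H$ of commodities, each $h\in\mathcal H$ with a nonempty finite family $\mathcal S^h\subseteq 2^{\mathcal R}$ of feasible strategies. A demand vector $\mu=(\mu^h)_{h\in\mathcal H}\in\mathbb R_+^{\mathcal H}$ defines the game $(\mathcal G,\mu)$. A feasible flow is $f=(f^h_s)$ with $f^h_s\ge0$, $\sum_{s\in\mathcal S^h}f^h_s=\mu^h$; it induces loads $x_r=\sum_h\sum_{s\in\mathcal S^h:r\in s}f^h_s$ and strategy costs $c_s=\sum_{r\in s}c_r(x_r)$. A Wardrop equilibrium is a feasible flow such that for each $h$ there is $\lambda^h$ with $c_s=\lambda^h$ for all $s\in\mathcal S^h$ with $f^h_s>0$ and $c_s\ge\lambda^h$ for all $s\in\mathcal S^h$ with $f^h_s=0$; an equilibrium load vector is the load vector of a Wardrop equilibrium. The structure is a singleton congestion game if every feasible strategy is a single resource, so $\mathcal S^h$ can be identified with a nonempty subset $\mathcal R^h\subseteq\mathcal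 R$. A monotone equilibrium selection (MES) is a choice, for each $\mu\in\mathbb R_+^{\mathcal H}$, of an equilibrium load vector $x(\mu)$ such that each $\mu\mapsto x_r(\mu)$ is nondecreasing in each coordinate $\mu^h$. *)

theory Defs
  imports "HOL-Analysis.Analysis"
begin

definition congestion_game_structure ::
  "'r set \<Rightarrow> ('r \<Rightarrow> real \<Rightarrow> real) \<Rightarrow> 'h set \<Rightarrow> ('h \<Rightarrow> 'r set set) \<Rightarrow> bool" where
  "congestion_game_structure R c H S \<longleftrightarrow>
     finite R \<and> finite H \<and>
     (\<forall>r\<in>R. continuous_on {0..} (c r) \<and> mono_on {0..} (c r) \<and> (\<forall>y\<ge>0. c r y \<ge> 0)) \<and>
     (\<forall>h\<in>H. S h \<noteq> {} \<and> finite (S h) \<and> S h \<subseteq> Pow R)"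

definition singleton_game :: "'h set \<Rightarrow> ('h \<Rightarrow> 'r set set) \<Rightarrow> bool" where
  "singleton_game H S \<longleftrightarrow> (\<forall>h\<in>H. \<forall>s\<in>S h. \<exists>r. s = {r})"

definition demands :: "'h set \<Rightarrow> ('h \<Rightarrow> real) set" where
  "demands H = {\<mu>. (\<forall>h\<in>H. \<mu> h \<ge> 0) \<and> (\<forall>h. h \<notin> H \<longrightarrow> \<mu> h = 0)}"

definition feasible_flow ::
  "'h set \<Rightarrow> ('h \<Rightarrow> 'r set set) \<Rightarrow> ('h \<Rightarrow> real) \<Rightarrow> ('h \<Rightarrow> 'r set \<Rightarrow> real) \<Rightarrow> bool" where
  "feasible_flow H S \<mu> f \<longleftrightarrow>
     (\<forall>h\<in>H. (\<forall>s\<in>S h. f h s \<ge> 0) \<and> (\<Sum>s\<in>S h. f h s) = \<mu> h)"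

definition load :: "'h set \<Rightarrow> ('h \<Rightarrow> 'r set set) \<Rightarrow> ('h \<Rightarrow> 'r set \<Rightarrow> real) \<Rightarrow> 'r \<Rightarrow> real" where
  "load H S f r = (\<Sum>h\<in>H. \<Sum>s\<in>{s\<in>S h. r \<in> s}. f h s)"

definition strategy_cost ::
  "('r \<Rightarrow> real \<Rightarrow> real) \<Rightarrow> 'h set \<Rightarrow> ('h \<Rightarrow> 'r set set) \<Rightarrow> ('h \<Rightarrow> 'r set \<Rightarrow> real) \<Rightarrow> 'r set \<Rightarrow> real" where
  "strategy_cost c H S f s = (\<Sum>r\<in>s. c r (load H S f r))"

definition wardrop_equilibrium ::
  "('r \<Rightarrow> real \<Rightarrow> real) \<Rightarrow> 'h set \<Rightarrow> ('h \<Rightarrow> 'r set set) \<Rightarrow> ('h \<Rightarrow> real) \<Rightarrow> ('h \<Rightarrow> 'r set \<Rightarrow> real) \<Rightarrow> bool" where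
  "wardrop_equilibrium c H S \<mu> f \<longleftrightarrow>
     feasible_flow H S \<mu> f \<and>
     (\<forall>h\<in>H. \<exists>lam. \<forall>s\<in>S h.
        (f h s > 0 \<longrightarrow> strategy_cost c H S f s = lam) \<and>
        (f h s = 0 \<longrightarrow> strategy_cost c H S f s \<ge> lam))"

definition equilibrium_load ::
  "'r set \<Rightarrow> ('r \<Rightarrow> real \<Rightarrow> real) \<Rightarrow> 'h set \<Rightarrow> ('h \<Rightarrow> 'r set set) \<Rightarrow> ('h \<Rightarrow> real) \<Rightarrow> ('r \<Rightarrow> real) \<Rightarrow> bool" where
  "equilibrium_load R c H S \<mu> x \<longleftrightarrow>
     (\<exists>f. wardrop_equilibrium c H S \<mu> f \<and> (\<forall>r\<in>R. x r = load H S f r))"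

definition monotone_equilibrium_selection ::
  "'r set \<Rightarrow> ('r \<Rightarrow> real \<Rightarrow> real) \<Rightarrow> 'h set \<Rightarrow> ('h \<Rightarrow> 'r set set) \<Rightarrow> (('h \<Rightarrow> real) \<Rightarrow> 'r \<Rightarrow> real) \<Rightarrow> bool" where
  "monotone_equilibrium_selection R c H S x \<longleftrightarrow>
     (\<forall>\<mu>\<in>demands H. equilibrium_load R c H S \<mu> (x \<mu>)) \<and>
     (\<forall>\<mu>\<in>demands H. \<forall>h\<in>H. \<forall>t. \<mu> h \<le> t \<longrightarrow> (\<forall>r\<in>R. x \<mu> r \<le> x (\<mu>(h := t)) r))"

end

theory Submission
  imports Defs
begin

lemma BW_finite:
  fixes X :: "nat \<Rightarrow> 'a \<Rightarrow> real"
  assumes "finite I" "\<And>n i. i \<in> I \<Longrightarrow> \<bar>X n i\<bar> \<le> B"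
  shows "\<exists>\<sigma>. strict_mono \<sigma> \<and> (\<forall>i\<in>I. convergent (\<lambda>n. X (\<sigma> n) i))"
  using assms
proof (induction I rule: finite_induct)
  case empty
  then show ?case by (auto intro: strict_mono_id)
next
  case (insert i J)
  then obtain \<sigma> where \<sigma>: "strict_mono \<sigma>" "\<forall>j\<in>J. convergent (\<lambda>n. X (\<sigma> n) j)" by auto
  have "bounded (range (\<lambda>n. X (\<sigma> n) i))"
    using insert.prems by (auto simp: bounded_iff)
  then obtain l \<tau> where \<tau>: "strict_mono \<tau>" "((\<lambda>n. X (\<sigma> n) i) \<circ> \<tau>) \<longlonglongrightarrow> l"
    using bounded_imp_convergent_subsequence by blast
  have "strict_mono (\<sigma> \<circ> \<tau>)" using \<sigma>(1) \<tau>(1) by (simp add: strict_mono_o)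
  moreover have "convergent (\<lambda>n. X ((\<sigma> \<circ> \<tau>) n) i)"
    using \<tau>(2) by (auto simp: convergent_def o_def)
  moreover have "convergent (\<lambda>n. X ((\<sigma> \<circ> \<tau>) n) j)" if "j \<in> J" for j
  proof -
    from \<sigma>(2) that obtain m where "(\<lambda>n. X (\<sigma> n) j) \<longlonglongrightarrow> m" by (auto simp: convergent_def)
    from LIMSEQ_subseq_LIMSEQ[OF this \<tau>(1)] show ?thesis by (auto simp: convergent_def o_def)
  qed
  ultimately show ?case by blast
qed

lemma pot_bounds:
  fixes c :: "real \<Rightarrow> real"
  assumes "continuous_on {0..} c" "mono_on {0..} c" "0 \<le> a" "a \<le> b"
  shows "(b - a) * c a \<le> integral {0..b} c - integral {0..a} c"
    and "integral {0..b} c - integral {0..a} c \<le> (b - a) * c b"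
proof -
  have int: "c integrable_on {0..b}"
    by (rule integrable_continuous_interval) (rule continuous_on_subset[OF assms(1)], auto)
  have eq: "integral {0..b} c - integral {0..a} c = integral {a..b} c"
    using Henstock_Kurzweil_Integration.integral_combine[OF assms(3,4) int] by simp
  have intab: "c integrable_on {a..b}"
    using integrable_subinterval_real[OF int] assms by auto
  have "integral {a..b} (\<lambda>_. c a) \<le> integral {a..b} c"
    by (rule integral_le) (use intab assms in \<open>auto intro!: mono_onD[OF assms(2)]\<close>)
  then show "(b - a) * c a \<le> integral {0..b} c - integral {0..a} c"
    using eq assms by simp
  have "integral {a..b} c \<le> integral {a..b} (\<lambda>_. c b)"
    by (rule integral_le) (use intab assms in \<open>auto intro!: mono_onD[OF assms(2)]\<close>)
  then show "integral {0..b} c - integral {0..a} c \<le> (b - a) * c b"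
    using eq assms by simp
qed

lemma pot_tendsto:
  fixes c :: "real \<Rightarrow> real"
  assumes "continuous_on {0..} c" "X \<longlonglongrightarrow> y" "\<And>n. X n \<ge> 0"
  shows "(\<lambda>n. integral {0..X n} c) \<longlonglongrightarrow> integral {0..y} c"
proof -
  have y: "y \<ge> 0" using assms(2,3) by (meson LIMSEQ_le_const)
  have int: "c integrable_on {0..y+1}"
    by (rule integrable_continuous_interval) (rule continuous_on_subset[OF assms(1)], auto)
  have cont: "continuous_on {0..y+1} (\<lambda>x. integral {0..x} c)"
    by (rule indefinite_integral_continuous_1[OF int])
  have ev: "\<forall>\<^sub>F n in sequentially. X n \<in> {0..y+1}"
  proof -
    have "\<forall>\<^sub>F n in sequentially. X n < y + 1" using order_tendstoD(2)[OF assms(2)] by simp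
    then show ?thesis by eventually_elim (use assms(3) in auto)
  qed
  show ?thesis
    using continuous_on_tendsto_compose[OF cont assms(2) _ ev] y by auto
qed

lemma min_exists:
  fixes \<phi> :: "('h \<Rightarrow> 's \<Rightarrow> real) \<Rightarrow> real"
  assumes finA: "finite A" and f0: "f0 \<in> K"
    and bound: "\<And>f k s. f \<in> K \<Longrightarrow> (k,s)\<in>A \<Longrightarrow> \<bar>f k s\<bar> \<le> B"
    and closed: "\<And>X g. (\<And>n. X n \<in> K) \<Longrightarrow> (\<And>k s. (k,s)\<in>A \<Longrightarrow> (\<lambda>n. X n k s) \<longlonglongrightarrow> g k s)
        \<Longrightarrow> (\<And>k s. (k,s) \<notin> A \<Longrightarrow> g k s = 0) \<Longrightarrow> g \<in> K"
    and cont: "\<And>X g. (\<And>n. X n \<in> K) \<Longrightarrow> g \<in> K \<Longrightarrow> (\<And>k s. (k,s)\<in>A \<Longrightarrow> (\<lambda>n. X n k s) \<longlonglongrightarrow> g k s)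
        \<Longrightarrow> (\<lambda>n. \<phi> (X n)) \<longlonglongrightarrow> \<phi> g"
    and lower: "\<And>f. f \<in> K \<Longrightarrow> \<phi> f \<ge> 0"
  shows "\<exists>f\<in>K. \<forall>g\<in>K. \<phi> f \<le> \<phi> g"
proof -
  define m where "m = Inf (\<phi> ` K)"
  have bdd: "bdd_below (\<phi> ` K)" using lower by (intro bdd_belowI[of _ 0]) auto
  have ne: "\<phi> ` K \<noteq> {}" using f0 by auto
  have "\<exists>f\<in>K. \<phi> f < m + inverse (real (Suc n))" for n
  proof -
    have "Inf (\<phi> ` K) < m + inverse (real (Suc n))" unfolding m_def by simp
    from cInf_lessD[OF ne this] show ?thesis by auto
  qed
  then obtain X where X: "\<And>n. X n \<in> K" "\<And>n. \<phi> (X n) < m + inverse (real (Suc n))"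
    by metis
  have mle: "m \<le> \<phi> g" if "g \<in> K" for g
    unfolding m_def using that bdd by (simp add: cInf_lower)
  obtain \<sigma> where \<sigma>: "strict_mono \<sigma>" "\<forall>p\<in>A. convergent (\<lambda>n. X (\<sigma> n) (fst p) (snd p))"
    using BW_finite[OF finA, of "\<lambda>n p. X n (fst p) (snd p)" B] bound X(1) by force
  define g where "g = (\<lambda>k s. if (k,s) \<in> A then lim (\<lambda>n. X (\<sigma> n) k s) else 0)"
  have conv: "(\<lambda>n. X (\<sigma> n) k s) \<longlonglongrightarrow> g k s" if "(k,s) \<in> A" for k s
    using \<sigma>(2) that unfolding g_def by (force simp: convergent_LIMSEQ_iff)
  have gK: "g \<in> K"
    by (rule closed[of "\<lambda>n. X (\<sigma> n)"]) (use X(1) conv in \<open>auto simp: g_def\<close>)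
  have lim: "(\<lambda>n. \<phi> (X (\<sigma> n))) \<longlonglongrightarrow> \<phi> g"
    by (rule cont) (use X(1) gK conv in auto)
  have "\<phi> g \<le> \<phi> h" if "h \<in> K" for h
  proof (rule LIMSEQ_le[OF lim])
    show "(\<lambda>n. \<phi> h + inverse (real (Suc n))) \<longlonglongrightarrow> \<phi> h"
      using tendsto_add[OF tendsto_const LIMSEQ_inverse_real_of_nat] by simp
    show "\<exists>N. \<forall>n\<ge>N. \<phi> (X (\<sigma> n)) \<le> \<phi> h + inverse (real (Suc n))"
    proof (intro exI allI impI)
      fix n
      have "n \<le> \<sigma> n" using seq_suble[OF \<sigma>(1)] .
      then have "inverse (real (Suc (\<sigma> n))) \<le> inverse (real (Suc n))"
        by (simp add: le_imp_inverse_le)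
      then show "\<phi> (X (\<sigma> n)) \<le> \<phi> h + inverse (real (Suc n))"
        using X(2)[of "\<sigma> n"] mle[OF that] by linarith
    qed
  qed
  then show ?thesis using gK by blast
qed

locale sg =
  fixes R :: "'r set" and c :: "'r \<Rightarrow> real \<Rightarrow> real" and H :: "'h set"
    and S :: "'h \<Rightarrow> 'r set set"
  assumes cgs: "congestion_game_structure R c H S" and sing: "singleton_game H S"
begin

lemma finR: "finite R" and finH: "finite H"
  and cont: "r \<in> R \<Longrightarrow> continuous_on {0..} (c r)"
  and mono: "r \<in> R \<Longrightarrow> mono_on {0..} (c r)"
  and cpos: "r \<in> R \<Longrightarrow> y \<ge> 0 \<Longrightarrow> c r y \<ge> 0"
  and Sne: "k \<in> H \<Longrightarrow> S k \<noteq> {}" and Sfin: "k \<in> H \<Longrightarrow> finite (S k)"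
  using cgs unfolding congestion_game_structure_def by auto

lemma SR: "k \<in> H \<Longrightarrow> {r} \<in> S k \<Longrightarrow> r \<in> R"
  using cgs unfolding congestion_game_structure_def by blast

lemma single: "k \<in> H \<Longrightarrow> s \<in> S k \<Longrightarrow> \<exists>r. s = {r}"
  using sing unfolding singleton_game_def by auto

definition "A = Sigma H S"
definition "F \<mu> = {f. feasible_flow H S \<mu> f \<and> (\<forall>k s. (k,s) \<notin> A \<longrightarrow> f k s = 0)}"
definition "P r y = integral {0..y} (c r)"
definition "Phi f = (\<Sum>r\<in>R. P r (load H S f r))"
definition "Nrm f = (\<Sum>r\<in>R. (load H S f r)^2)"
definition "M \<mu> = {f \<in> F \<mu>. \<forall>g\<in>F \<mu>. Phi f \<le> Phi g}"
definition "sel \<mu> = (SOME f. f \<in> M \<mu> \<and> (\<forall>g\<in>M \<mu>. Nrm f \<le> Nrm g))"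

lemma finA: "finite A"
  unfolding A_def using finH Sfin by auto

lemma load_alt: "load H S f r = (\<Sum>k\<in>H. if {r} \<in> S k then f k {r} else 0)"
  unfolding load_def
proof (rule sum.cong[OF refl])
  fix k assume k: "k \<in> H"
  have "{s \<in> S k. r \<in> s} = (if {r} \<in> S k then {{r}} else {})"
    using single[OF k] by auto
  then show "(\<Sum>s\<in>{s \<in> S k. r \<in> s}. f k s) = (if {r} \<in> S k then f k {r} else 0)"
    by simp
qed

lemma cost_single: "strategy_cost c H S f {r} = c r (load H S f r)"
  unfolding strategy_cost_def by simp

lemma F_nonneg: "f \<in> F \<mu> \<Longrightarrow> f k s \<ge> 0"
  unfolding F_def feasible_flow_def A_def by (cases "k \<in> H \<and> s \<in> S k") auto

lemma load_nonneg: "f \<in> F \<mu> \<Longrightarrow> load H S f r \<ge> 0"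
  unfolding load_alt by (rule sum_nonneg) (auto intro: F_nonneg)

lemma flow_le_load:
  assumes "f \<in> F \<mu>" "k \<in> H" "{r} \<in> S k"
  shows "f k {r} \<le> load H S f r"
proof -
  have "(if {r} \<in> S k then f k {r} else 0) \<le> (\<Sum>k\<in>H. if {r} \<in> S k then f k {r} else 0)"
    by (rule member_le_sum) (use assms finH F_nonneg[OF assms(1)] in auto)
  then show ?thesis using assms(3) unfolding load_alt by simp
qed

lemma load_perturb:
  assumes "\<And>r. (\<Sum>k\<in>H. if {r} \<in> S k then d k {r} else 0) = e r"
  shows "load H S (\<lambda>k s. f k s + t * d k s) r = load H S f r + t * e r"
proof -
  have "load H S (\<lambda>k s. f k s + t * d k s) r
     = (\<Sum>k\<in>H. (if {r} \<in> S k then f k {r} else 0) + t * (if {r} \<in> S k then d k {r} else 0))"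
    unfolding load_alt by (rule sum.cong) auto
  also have "\<dots> = load H S f r + t * e r"
    unfolding sum.distrib load_alt sum_distrib_left[symmetric] assms ..
  finally show ?thesis .
qed

lemma sum_two:
  fixes Q :: "'r \<Rightarrow> real \<Rightarrow> real"
  assumes "a \<in> R" "b \<in> R" "a \<noteq> b"
  shows "(\<Sum>r\<in>R. Q r (x r + t * ((if r = b then 1 else 0) - (if r = a then 1 else 0))))
    = (\<Sum>r\<in>R. Q r (x r)) + (Q a (x a - t) - Q a (x a)) + (Q b (x b + t) - Q b (x b))"
proof -
  have "\<forall>r\<in>R. Q r (x r + t * ((if r = b then 1 else 0) - (if r = a then 1 else 0)))
     = Q r (x r) + (if r = a then Q a (x a - t) - Q a (x a) else 0)
        + (if r = b then Q b (x b + t) - Q b (x b) else 0)"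
    using assms by auto
  then show ?thesis
    using assms finR by (simp add: sum.distrib sum.delta)
qed

definition "elem k a b = (\<lambda>k' s. if k' = k then (if s = {a} then -1 else if s = {b} then 1 else 0) else (0::real))"

lemma elem_props:
  assumes "k \<in> H" "{a} \<in> S k" "{b} \<in> S k" "a \<noteq> b"
  shows "\<And>k'. k' \<in> H \<Longrightarrow> (\<Sum>s\<in>S k'. elem k a b k' s) = 0"
    and "\<And>r. (\<Sum>k'\<in>H. if {r} \<in> S k' then elem k a b k' {r} else 0)
            = (if r = b then 1 else 0) - (if r = a then 1 else 0)"
    and "\<And>k' s. elem k a b k' s < 0 \<longleftrightarrow> k' = k \<and> s = {a}"
    and "\<And>k' s. elem k a b k' s > 0 \<longleftrightarrow> k' = k \<and> s = {b}"
proof -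
  fix k' assume k': "k' \<in> H"
  show "(\<Sum>s\<in>S k'. elem k a b k' s) = 0"
  proof (cases "k' = k")
    case True
    have "(\<Sum>s\<in>S k'. elem k a b k' s) = (\<Sum>s\<in>S k. (if s = {b} then 1 else 0) - (if s = {a} then 1 else 0))"
      using True assms by (intro sum.cong) (auto simp: elem_def)
    also have "\<dots> = 0" using assms Sfin by (simp add: sum_subtractf sum.delta)
    finally show ?thesis .
  qed (simp add: elem_def)
next
  fix r
  have "(\<Sum>k'\<in>H. if {r} \<in> S k' then elem k a b k' {r} else 0)
      = (\<Sum>k'\<in>H. if k' = k then (if {r} \<in> S k then elem k a b k {r} else 0) else 0)"
    by (rule sum.cong) (auto simp: elem_def)
  also have "\<dots> = (if {r} \<in> S k then elem k a b k {r} else 0)"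
    using assms finH by (simp add: sum.delta)
  also have "\<dots> = (if r = b then 1 else 0) - (if r = a then 1 else 0)"
    using assms by (auto simp: elem_def)
  finally show "(\<Sum>k'\<in>H. if {r} \<in> S k' then elem k a b k' {r} else 0)
            = (if r = b then 1 else 0) - (if r = a then 1 else 0)" .
next
  fix k' s show "elem k a b k' s < 0 \<longleftrightarrow> k' = k \<and> s = {a}" by (auto simp: elem_def)
next
  fix k' s show "elem k a b k' s > 0 \<longleftrightarrow> k' = k \<and> s = {b}" using assms by (auto simp: elem_def)
qed

lemma P_nonneg:
  assumes "r \<in> R" "y \<ge> 0" shows "P r y \<ge> 0"
proof -
  have "(y - 0) * c r 0 \<le> integral {0..y} (c r) - integral {0..0} (c r)"
    by (rule pot_bounds(1)[OF cont[OF assms(1)] mono[OF assms(1)]]) (use assms in auto)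
  moreover have "y * c r 0 \<ge> 0" using cpos[OF assms(1), of 0] assms(2) by simp
  ultimately show ?thesis unfolding P_def by simp
qed

lemma Phi_nonneg: "f \<in> F \<mu> \<Longrightarrow> Phi f \<ge> 0"
  unfolding Phi_def by (rule sum_nonneg) (rule P_nonneg, assumption, rule load_nonneg)

lemma Nrm_nonneg: "Nrm f \<ge> 0"
  unfolding Nrm_def by (auto intro!: sum_nonneg)

lemma load_tendsto:
  assumes "\<And>k s. (k,s) \<in> A \<Longrightarrow> (\<lambda>n. X n k s) \<longlonglongrightarrow> g k s"
  shows "(\<lambda>n. load H S (X n) r) \<longlonglongrightarrow> load H S g r"
  unfolding load_def using assms unfolding A_def
  by (intro tendsto_sum) auto

lemma Phi_tendsto:
  assumes "\<And>n. X n \<in> F \<mu>" "\<And>k s. (k,s) \<in> A \<Longrightarrow> (\<lambda>n. X n k s) \<longlonglongrightarrow> g k s"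
  shows "(\<lambda>n. Phi (X n)) \<longlonglongrightarrow> Phi g"
  unfolding Phi_def P_def
  by (intro tendsto_sum pot_tendsto cont load_tendsto assms load_nonneg[OF assms(1)])

lemma Nrm_tendsto:
  assumes "\<And>k s. (k,s) \<in> A \<Longrightarrow> (\<lambda>n. X n k s) \<longlonglongrightarrow> g k s"
  shows "(\<lambda>n. Nrm (X n)) \<longlonglongrightarrow> Nrm g"
  unfolding Nrm_def
  by (intro tendsto_sum tendsto_power load_tendsto assms)

end

context sg begin

lemma F_ne: assumes "\<mu> \<in> demands H" shows "\<exists>f. f \<in> F \<mu>"
proof -
  define f0 where "f0 = (\<lambda>k s. if k \<in> H \<and> s = (SOME s. s \<in> S k) then \<mu> k else 0)"
  have "f0 \<in> F \<mu>"
    unfolding F_def feasible_flow_def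
  proof (intro CollectI conjI ballI allI impI)
    fix k assume k: "k \<in> H"
    then have "(SOME s. s \<in> S k) \<in> S k" using Sne by (simp add: some_in_eq)
    then show "(\<Sum>s\<in>S k. f0 k s) = \<mu> k" using k Sfin[OF k] by (simp add: f0_def)
    fix s show "0 \<le> f0 k s" using assms k unfolding demands_def f0_def by auto
  next
    fix k s assume "(k, s) \<notin> A"
    moreover have "k \<in> H \<Longrightarrow> (SOME s. s \<in> S k) \<in> S k" using Sne by (simp add: some_in_eq)
    ultimately show "f0 k s = 0" unfolding A_def f0_def by auto
  qed
  then show ?thesis by blast
qed

lemma F_bound:
  assumes "f \<in> F \<mu>" "(k,s) \<in> A" shows "\<bar>f k s\<bar> \<le> \<mu> k"
proof -
  have k: "k \<in> H" "s \<in> S k" using assms(2) unfolding A_def by auto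
  have "f k s \<le> (\<Sum>s\<in>S k. f k s)"
    by (rule member_le_sum) (use k Sfin F_nonneg[OF assms(1)] in auto)
  also have "\<dots> = \<mu> k" using assms(1) k unfolding F_def feasible_flow_def by auto
  finally show ?thesis using F_nonneg[OF assms(1)] by simp
qed

lemma F_bound2:
  assumes "\<mu> \<in> demands H" "f \<in> F \<mu>" "(k,s) \<in> A" shows "\<bar>f k s\<bar> \<le> (\<Sum>k\<in>H. \<mu> k)"
proof -
  have "k \<in> H" using assms(3) unfolding A_def by auto
  then have "\<mu> k \<le> (\<Sum>k\<in>H. \<mu> k)"
    by (intro member_le_sum) (use assms(1) finH in \<open>auto simp: demands_def\<close>)
  then show ?thesis using F_bound[OF assms(2,3)] by linarith
qed

lemma F_closed:
  assumes X: "\<And>n. X n \<in> F \<mu>" and conv: "\<And>k s. (k,s) \<in> A \<Longrightarrow> (\<lambda>n. X n k s) \<longlonglongrightarrow> g k s"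
    and z: "\<And>k s. (k,s) \<notin> A \<Longrightarrow> g k s = 0"
  shows "g \<in> F \<mu>"
  unfolding F_def feasible_flow_def
proof (intro CollectI conjI ballI allI impI)
  fix k assume k: "k \<in> H"
  fix s assume s: "s \<in> S k"
  show "0 \<le> g k s"
    by (rule LIMSEQ_le_const[OF conv]) (use k s F_nonneg[OF X] in \<open>auto simp: A_def\<close>)
next
  fix k assume k: "k \<in> H"
  have "(\<lambda>n. \<Sum>s\<in>S k. X n k s) \<longlonglongrightarrow> (\<Sum>s\<in>S k. g k s)"
    by (intro tendsto_sum conv) (use k in \<open>auto simp: A_def\<close>)
  moreover have "(\<lambda>n. \<Sum>s\<in>S k. X n k s) = (\<lambda>n. \<mu> k)"
    using X k unfolding F_def feasible_flow_def by auto
  ultimately show "(\<Sum>s\<in>S k. g k s) = \<mu> k"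
    by (metis LIMSEQ_unique tendsto_const)
next
  fix k s assume "(k,s) \<notin> A" then show "g k s = 0" by (rule z)
qed

lemma M_ne: assumes "\<mu> \<in> demands H" shows "\<exists>f. f \<in> M \<mu>"
proof -
  obtain f0 where f0: "f0 \<in> F \<mu>" using F_ne[OF assms] by blast
  have "\<exists>f\<in>F \<mu>. \<forall>g\<in>F \<mu>. Phi f \<le> Phi g"
  proof (rule min_exists[OF finA f0, where B="\<Sum>k\<in>H. \<mu> k"])
    show "\<And>f k s. f \<in> F \<mu> \<Longrightarrow> (k, s) \<in> A \<Longrightarrow> \<bar>f k s\<bar> \<le> (\<Sum>k\<in>H. \<mu> k)"
      by (rule F_bound2[OF assms])
    show "\<And>X g. (\<And>n. X n \<in> F \<mu>) \<Longrightarrow> (\<And>k s. (k, s) \<in> A \<Longrightarrow> (\<lambda>n. X n k s) \<longlonglongrightarrow> g k s) \<Longrightarrow> (\<And>k s. (k, s) \<notin> A \<Longrightarrow> g k s = 0) \<Longrightarrow> g \<in> F \<mu>"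
      by (rule F_closed)
    show "\<And>X g. (\<And>n. X n \<in> F \<mu>) \<Longrightarrow> g \<in> F \<mu> \<Longrightarrow> (\<And>k s. (k, s) \<in> A \<Longrightarrow> (\<lambda>n. X n k s) \<longlonglongrightarrow> g k s) \<Longrightarrow> (\<lambda>n. Phi (X n)) \<longlonglongrightarrow> Phi g"
      by (rule Phi_tendsto)
    show "\<And>f. f \<in> F \<mu> \<Longrightarrow> 0 \<le> Phi f" by (rule Phi_nonneg)
  qed
  then show ?thesis unfolding M_def by blast
qed

lemma M_closed:
  assumes X: "\<And>n. X n \<in> M \<mu>" and conv: "\<And>k s. (k,s) \<in> A \<Longrightarrow> (\<lambda>n. X n k s) \<longlonglongrightarrow> g k s"
    and z: "\<And>k s. (k,s) \<notin> A \<Longrightarrow> g k s = 0"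
  shows "g \<in> M \<mu>"
proof -
  have XF: "\<And>n. X n \<in> F \<mu>" using X unfolding M_def by auto
  have gF: "g \<in> F \<mu>" by (rule F_closed[OF XF conv z])
  have "Phi g \<le> Phi h" if "h \<in> F \<mu>" for h
    by (rule LIMSEQ_le_const2[OF Phi_tendsto[OF XF conv]]) (use X that in \<open>auto simp: M_def\<close>)
  then show ?thesis using gF unfolding M_def by auto
qed

lemma sel_prop:
  assumes "\<mu> \<in> demands H"
  shows "sel \<mu> \<in> M \<mu>" "\<And>g. g \<in> M \<mu> \<Longrightarrow> Nrm (sel \<mu>) \<le> Nrm g"
proof -
  obtain f0 where f0: "f0 \<in> M \<mu>" using M_ne[OF assms] by blast
  have ex: "\<exists>f\<in>M \<mu>. \<forall>g\<in>M \<mu>. Nrm f \<le> Nrm g"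
  proof (rule min_exists[OF finA f0, where B="\<Sum>k\<in>H. \<mu> k"])
    show "\<And>f k s. f \<in> M \<mu> \<Longrightarrow> (k, s) \<in> A \<Longrightarrow> \<bar>f k s\<bar> \<le> (\<Sum>k\<in>H. \<mu> k)"
      using F_bound2[OF assms] unfolding M_def by blast
    show "\<And>X g. (\<And>n. X n \<in> M \<mu>) \<Longrightarrow> (\<And>k s. (k, s) \<in> A \<Longrightarrow> (\<lambda>n. X n k s) \<longlonglongrightarrow> g k s) \<Longrightarrow> (\<And>k s. (k, s) \<notin> A \<Longrightarrow> g k s = 0) \<Longrightarrow> g \<in> M \<mu>"
      by (rule M_closed)
    show "\<And>X g. (\<And>n. X n \<in> M \<mu>) \<Longrightarrow> g \<in> M \<mu> \<Longrightarrow> (\<And>k s. (k, s) \<in> A \<Longrightarrow> (\<lambda>n. X n k s) \<longlonglongrightarrow> g k s) \<Longrightarrow> (\<lambda>n. Nrm (X n)) \<longlonglongrightarrow> Nrm g"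
      by (rule Nrm_tendsto)
    show "\<And>f. f \<in> M \<mu> \<Longrightarrow> 0 \<le> Nrm f" by (rule Nrm_nonneg)
  qed
  then have "sel \<mu> \<in> M \<mu> \<and> (\<forall>g\<in>M \<mu>. Nrm (sel \<mu>) \<le> Nrm g)"
    unfolding sel_def by (rule someI_ex[where P = "\<lambda>f. f \<in> M \<mu> \<and> (\<forall>g\<in>M \<mu>. Nrm f \<le> Nrm g)", OF bexE]) blast
  then show "sel \<mu> \<in> M \<mu>" "\<And>g. g \<in> M \<mu> \<Longrightarrow> Nrm (sel \<mu>) \<le> Nrm g" by auto
qed

end

context sg begin

lemma perturb_F:
  assumes f: "f \<in> F \<mu>" and d0: "\<And>k. k \<in> H \<Longrightarrow> (\<Sum>s\<in>S k. d k s) = 0"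
    and dA: "\<And>k s. d k s \<noteq> 0 \<Longrightarrow> (k,s) \<in> A"
    and nn: "\<And>k s. (k,s) \<in> A \<Longrightarrow> f k s + t * d k s \<ge> 0"
  shows "(\<lambda>k s. f k s + t * d k s) \<in> F \<mu>"
  unfolding F_def feasible_flow_def
proof (intro CollectI conjI ballI allI impI)
  fix k assume k: "k \<in> H"
  fix s assume "s \<in> S k" then show "0 \<le> f k s + t * d k s" using k nn by (auto simp: A_def)
next
  fix k assume k: "k \<in> H"
  have "(\<Sum>s\<in>S k. f k s + t * d k s) = (\<Sum>s\<in>S k. f k s) + t * (\<Sum>s\<in>S k. d k s)"
    by (simp add: sum.distrib sum_distrib_left)
  then show "(\<Sum>s\<in>S k. f k s + t * d k s) = \<mu> k"
    using f k d0[OF k] unfolding F_def feasible_flow_def by auto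
next
  fix k s assume "(k, s) \<notin> A"
  then show "f k s + t * d k s = 0" using f dA unfolding F_def by fastforce
qed

lemma elem_A: assumes "k \<in> H" "{a} \<in> S k" "{b} \<in> S k" shows "elem k a b k' s \<noteq> 0 \<Longrightarrow> (k',s) \<in> A"
  using assms by (auto simp: elem_def A_def split: if_splits)

lemma no_better:
  assumes fM: "f \<in> M \<mu>" and k: "k \<in> H" and r: "{r} \<in> S k" and r': "{r'} \<in> S k"
    and pos: "f k {r} > 0"
  shows "c r (load H S f r) \<le> c r' (load H S f r')"
proof (rule ccontr)
  assume "\<not> ?thesis"
  then have lt: "c r' (load H S f r') < c r (load H S f r)" by simp
  define x where "x = load H S f r"
  define x' where "x' = load H S f r'"
  have fF: "f \<in> F \<mu>" using fM unfolding M_def by auto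
  have rr': "r \<noteq> r'" using lt by auto
  have rR: "r \<in> R" and r'R: "r' \<in> R" using SR k r r' by auto
  define \<gamma> where "\<gamma> = (c r x - c r' x') / 2"
  have \<gamma>: "\<gamma> > 0" using lt unfolding \<gamma>_def x_def x'_def by simp
  have x0: "x \<ge> 0" "x' \<ge> 0" unfolding x_def x'_def using load_nonneg[OF fF] by auto
  obtain d1 where d1: "d1 > 0" "\<And>y. y \<in> {0..} \<Longrightarrow> dist y x < d1 \<Longrightarrow> dist (c r y) (c r x) < \<gamma>"
    using cont[OF rR] x0 \<gamma> unfolding continuous_on_iff by (metis atLeast_iff)
  obtain d2 where d2: "d2 > 0" "\<And>y. y \<in> {0..} \<Longrightarrow> dist y x' < d2 \<Longrightarrow> dist (c r' y) (c r' x') < \<gamma>"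
    using cont[OF r'R] x0 \<gamma> unfolding continuous_on_iff by (metis atLeast_iff)
  define t where "t = min (f k {r}) (min d1 d2 / 2)"
  have t: "t > 0" "t \<le> f k {r}" "t < d1" "t < d2" using pos d1 d2 unfolding t_def by auto
  have tx: "t \<le> x" using t(2) flow_le_load[OF fF k r] unfolding x_def by simp
  define g where "g = (\<lambda>k' s. f k' s + t * elem k r r' k' s)"
  have gF: "g \<in> F \<mu>" unfolding g_def
  proof (rule perturb_F[OF fF])
    show "\<And>k'. k' \<in> H \<Longrightarrow> (\<Sum>s\<in>S k'. elem k r r' k' s) = 0" by (rule elem_props(1)[OF k r r' rr'])
    show "\<And>k' s. elem k r r' k' s \<noteq> 0 \<Longrightarrow> (k', s) \<in> A" by (rule elem_A[OF k r r'])
    show "\<And>k' s. (k', s) \<in> A \<Longrightarrow> 0 \<le> f k' s + t * elem k r r' k' s"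
      using t F_nonneg[OF fF] by (auto simp: elem_def)
  qed
  have ld: "load H S g \<rho> = load H S f \<rho> + t * ((if \<rho> = r' then 1 else 0) - (if \<rho> = r then 1 else 0))" for \<rho>
    unfolding g_def by (rule load_perturb) (rule elem_props(2)[OF k r r' rr'])
  have "Phi g = Phi f + (P r (x - t) - P r x) + (P r' (x' + t) - P r' x')"
    unfolding Phi_def ld x_def x'_def by (rule sum_two[OF rR r'R rr'])
  moreover have "(x - (x - t)) * c r (x - t) \<le> P r x - P r (x - t)"
    unfolding P_def by (rule pot_bounds(1)[OF cont[OF rR] mono[OF rR]]) (use tx t in auto)
  moreover have "P r' (x' + t) - P r' x' \<le> (x' + t - x') * c r' (x' + t)"
    unfolding P_def by (rule pot_bounds(2)[OF cont[OF r'R] mono[OF r'R]]) (use x0 t in auto)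
  moreover have "c r (x - t) > c r x - \<gamma>"
    using d1(2)[of "x - t"] tx t by (auto simp: dist_real_def)
  moreover have "c r' (x' + t) < c r' x' + \<gamma>"
    using d2(2)[of "x' + t"] x0 t by (auto simp: dist_real_def)
  ultimately have "Phi g - Phi f \<le> t * (c r' (x' + t) - c r (x - t))"
    by (simp add: algebra_simps)
  moreover have "c r' (x' + t) - c r (x - t) < 0"
  proof -
    have "c r x - \<gamma> = c r' x' + \<gamma>" unfolding \<gamma>_def by (simp add: field_simps)
    then show ?thesis using \<open>c r (x - t) > c r x - \<gamma>\<close> \<open>c r' (x' + t) < c r' x' + \<gamma>\<close> by linarith
  qed
  ultimately have "Phi g < Phi f" using t(1) by (smt (verit) mult_pos_neg)
  then show False using fM gF unfolding M_def by force
qed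

lemma M_wardrop: assumes "f \<in> M \<mu>" shows "wardrop_equilibrium c H S \<mu> f"
  unfolding wardrop_equilibrium_def
proof (intro conjI ballI)
  have fF: "f \<in> F \<mu>" using assms unfolding M_def by auto
  then show "feasible_flow H S \<mu> f" unfolding F_def by auto
  fix k assume k: "k \<in> H"
  define lam where "lam = Min (strategy_cost c H S f ` S k)"
  have fin: "finite (strategy_cost c H S f ` S k)" using Sfin[OF k] by simp
  have ne: "strategy_cost c H S f ` S k \<noteq> {}" using Sne[OF k] by simp
  show "\<exists>lam. \<forall>s\<in>S k. (0 < f k s \<longrightarrow> strategy_cost c H S f s = lam) \<and>
          (f k s = 0 \<longrightarrow> lam \<le> strategy_cost c H S f s)"
  proof (intro exI[of _ lam] ballI conjI impI)
    fix s assume s: "s \<in> S k"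
    show "lam \<le> strategy_cost c H S f s" unfolding lam_def using fin s by simp
    assume pos: "0 < f k s"
    obtain s' where s': "s' \<in> S k" "lam = strategy_cost c H S f s'"
      using Min_in[OF fin ne] unfolding lam_def by auto
    obtain r where r: "s = {r}" using single[OF k s] by auto
    obtain r' where r': "s' = {r'}" using single[OF k s'(1)] by auto
    have "strategy_cost c H S f s \<le> lam"
      using no_better[OF assms k, of r r'] s s' r r' pos by (simp add: cost_single)
    then show "strategy_cost c H S f s = lam"
      using \<open>lam \<le> strategy_cost c H S f s\<close> by simp
  qed
qed

end

context sg begin

lemma reach:
  assumes fF: "f \<in> F \<mu>" and fF': "f' \<in> F \<mu>'" and hle: "\<And>k. k \<in> H \<Longrightarrow> \<mu> k \<le> \<mu>' k"
    and aR: "a \<in> R" and alt: "load H S f' a < load H S f a"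
  defines "E \<equiv> {(p,q). \<exists>k\<in>H. {p} \<in> S k \<and> {q} \<in> S k \<and> f' k {p} < f k {p} \<and> f k {q} < f' k {q}}"
  shows "\<exists>b\<in>R. load H S f b < load H S f' b \<and> (a,b) \<in> E\<^sup>*"
proof (rule ccontr)
  assume contra: "\<not> ?thesis"
  define T where "T = {r\<in>R. (a,r) \<in> E\<^sup>*}"
  have finT: "finite T" unfolding T_def using finR by simp
  have aT: "a \<in> T" unfolding T_def using aR by simp
  have le: "\<forall>r\<in>T. load H S f' r \<le> load H S f r" using contra unfolding T_def by force
  have "(\<Sum>r\<in>T. load H S f' r) < (\<Sum>r\<in>T. load H S f r)"
    by (rule sum_strict_mono_ex1[OF finT le]) (use aT alt in blast)
  then have neg: "(\<Sum>r\<in>T. load H S f' r - load H S f r) < 0" by (simp add: sum_subtractf)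
  define \<delta> where "\<delta> k r = f' k {r} - f k {r}" for k r
  have "(\<Sum>r\<in>T. load H S f' r - load H S f r) = (\<Sum>r\<in>T. \<Sum>k\<in>H. if {r} \<in> S k then \<delta> k r else 0)"
    unfolding load_alt \<delta>_def by (rule sum.cong[OF refl]) (simp add: sum_subtractf[symmetric] if_distrib, rule sum.cong, auto)
  also have "\<dots> = (\<Sum>k\<in>H. \<Sum>r\<in>T. if {r} \<in> S k then \<delta> k r else 0)" by (rule sum.swap)
  also have "\<dots> \<ge> 0"
  proof (rule sum_nonneg)
    fix k assume k: "k \<in> H"
    define Rk where "Rk = {r\<in>R. {r} \<in> S k}"
    have finRk: "finite Rk" unfolding Rk_def using finR by simp
    have Sk: "S k = (\<lambda>r. {r}) ` Rk"
      unfolding Rk_def using single[OF k] SR[OF k] by fastforce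
    have "(\<Sum>r\<in>Rk. \<delta> k r) = (\<Sum>s\<in>S k. f' k s - f k s)"
      unfolding Sk by (subst sum.reindex) (auto simp: inj_on_def \<delta>_def)
    also have "\<dots> = \<mu>' k - \<mu> k"
      using fF fF' k unfolding F_def feasible_flow_def by (simp add: sum_subtractf)
    finally have tot: "(\<Sum>r\<in>Rk. \<delta> k r) \<ge> 0" using hle[OF k] by simp
    have eq: "(\<Sum>r\<in>T. if {r} \<in> S k then \<delta> k r else 0) = (\<Sum>r\<in>Rk \<inter> T. \<delta> k r)"
    proof -
      have "(\<Sum>r\<in>Rk \<inter> T. \<delta> k r) = (\<Sum>r\<in>T \<inter> Rk. \<delta> k r)" by (simp add: Int_commute)
      also have "\<dots> = (\<Sum>r\<in>T. if r \<in> Rk then \<delta> k r else 0)" by (rule sum.inter_restrict[OF finT])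
      also have "\<dots> = (\<Sum>r\<in>T. if {r} \<in> S k then \<delta> k r else 0)"
        by (rule sum.cong) (auto simp: Rk_def T_def)
      finally show ?thesis by simp
    qed
    show "0 \<le> (\<Sum>r\<in>T. if {r} \<in> S k then \<delta> k r else 0)"
    proof (cases "\<exists>p\<in>Rk \<inter> T. \<delta> k p < 0")
      case True
      then obtain p where p: "p \<in> Rk" "p \<in> T" "\<delta> k p < 0" by auto
      have "\<delta> k q \<le> 0" if q: "q \<in> Rk - T" for q
      proof (rule ccontr)
        assume "\<not> \<delta> k q \<le> 0"
        then have "(p,q) \<in> E" using p q k unfolding E_def \<delta>_def Rk_def by auto
        then have "(a,q) \<in> E\<^sup>*" using p(2) unfolding T_def by auto
        then show False using q unfolding T_def Rk_def by auto
      qed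
      then have "(\<Sum>r\<in>Rk - T. \<delta> k r) \<le> 0" by (rule sum_nonpos)
      moreover have "(\<Sum>r\<in>Rk. \<delta> k r) = (\<Sum>r\<in>Rk \<inter> T. \<delta> k r) + (\<Sum>r\<in>Rk - T. \<delta> k r)"
        by (rule sum.Int_Diff[OF finRk])
      ultimately show ?thesis using tot eq by linarith
    next
      case False
      then show ?thesis unfolding eq by (intro sum_nonneg) (auto simp: not_less)
    qed
  qed
  finally show False using neg by simp
qed

end

context sg begin

lemma chain:
  assumes fM: "f \<in> M \<mu>" and fM': "f' \<in> M \<mu>'"
    and ab: "(a,b) \<in> {(p,q). \<exists>k\<in>H. {p} \<in> S k \<and> {q} \<in> S k \<and> f' k {p} < f k {p} \<and> f k {q} < f' k {q}}\<^sup>*"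
  shows "c a (load H S f a) \<le> c b (load H S f b) \<and> c b (load H S f' b) \<le> c a (load H S f' a)"
  using ab
proof (induction rule: rtrancl_induct)
  case base then show ?case by simp
next
  case (step b q)
  then obtain k where k: "k \<in> H" "{b} \<in> S k" "{q} \<in> S k" "f' k {b} < f k {b}" "f k {q} < f' k {q}" by auto
  have fF: "f \<in> F \<mu>" and fF': "f' \<in> F \<mu>'" using fM fM' unfolding M_def by auto
  have "c b (load H S f b) \<le> c q (load H S f q)"
    by (rule no_better[OF fM k(1-3)]) (use k(4) F_nonneg[OF fF', of k "{b}"] in linarith)
  moreover have "c q (load H S f' q) \<le> c b (load H S f' b)"
    by (rule no_better[OF fM' k(1,3,2)]) (use k(5) F_nonneg[OF fF, of k "{q}"] in linarith)
  ultimately show ?case using step.IH by linarith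
qed

lemma pert:
  fixes f f' :: "'h \<Rightarrow> 'r set \<Rightarrow> real"
  assumes ab: "(a,b) \<in> {(p,q). \<exists>k\<in>H. {p} \<in> S k \<and> {q} \<in> S k \<and> f' k {p} < f k {p} \<and> f k {q} < f' k {q}}\<^sup>*"
  shows "\<exists>d::'h \<Rightarrow> 'r set \<Rightarrow> real. (\<forall>k\<in>H. (\<Sum>s\<in>S k. d k s) = 0)
    \<and> (\<forall>r. (\<Sum>k\<in>H. if {r} \<in> S k then d k {r} else 0) = (if r = b then 1 else 0) - (if r = a then 1 else 0))
    \<and> (\<forall>k s. d k s < 0 \<longrightarrow> (k,s) \<in> A \<and> f' k s < f k s)
    \<and> (\<forall>k s. d k s > 0 \<longrightarrow> (k,s) \<in> A \<and> f k s < f' k s)"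
  using ab
proof (induction rule: rtrancl_induct)
  case base
  show ?case by (rule exI[of _ "\<lambda>k s. 0"]) simp
next
  case (step b q)
  then obtain k where k: "k \<in> H" "{b} \<in> S k" "{q} \<in> S k" "f' k {b} < f k {b}" "f k {q} < f' k {q}" by auto
  have bq: "b \<noteq> q" using k(4,5) by auto
  from step.IH obtain d :: "'h \<Rightarrow> 'r set \<Rightarrow> real" where d: "\<forall>k\<in>H. (\<Sum>s\<in>S k. d k s) = 0"
    "\<forall>r. (\<Sum>k\<in>H. if {r} \<in> S k then d k {r} else 0) = (if r = b then 1 else 0) - (if r = a then 1 else 0)"
    "\<forall>k s. d k s < 0 \<longrightarrow> (k,s) \<in> A \<and> f' k s < f k s"
    "\<forall>k s. d k s > 0 \<longrightarrow> (k,s) \<in> A \<and> f k s < f' k s" by blast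
  define d' where "d' = (\<lambda>k' s. d k' s + elem k b q k' s)"
  note ep = elem_props[OF k(1-3) bq]
  show ?case
  proof (intro exI[of _ d'] conjI allI ballI impI)
    fix k' assume "k' \<in> H"
    then show "(\<Sum>s\<in>S k'. d' k' s) = 0" unfolding d'_def using d(1) ep(1) by (simp add: sum.distrib)
  next
    fix r
    have "(\<Sum>k'\<in>H. if {r} \<in> S k' then d' k' {r} else 0)
      = (\<Sum>k'\<in>H. if {r} \<in> S k' then d k' {r} else 0) + (\<Sum>k'\<in>H. if {r} \<in> S k' then elem k b q k' {r} else 0)"
      unfolding d'_def by (simp add: sum.distrib[symmetric] if_distrib) (rule sum.cong, auto)
    then show "(\<Sum>k'\<in>H. if {r} \<in> S k' then d' k' {r} else 0) = (if r = q then 1 else 0) - (if r = a then 1 else 0)"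
      using d(2) ep(2) by simp
  next
    fix k' s assume "d' k' s < 0"
    then have "d k' s < 0 \<or> elem k b q k' s < 0" unfolding d'_def by linarith
    then show "(k', s) \<in> A" "f' k' s < f k' s" using d(3) ep(3) k by (auto simp: A_def)
  next
    fix k' s assume "d' k' s > 0"
    then have "d k' s > 0 \<or> elem k b q k' s > 0" unfolding d'_def by linarith
    then show "(k', s) \<in> A" "f k' s < f' k' s" using d(4) ep(4) k by (auto simp: A_def)
  qed
qed

end

context sg begin

lemma sel_mono:
  assumes dm: "\<mu> \<in> demands H" and dm': "\<mu>' \<in> demands H"
    and hle: "\<And>k. k \<in> H \<Longrightarrow> \<mu> k \<le> \<mu>' k" and aR: "a \<in> R"
  shows "load H S (sel \<mu>) a \<le> load H S (sel \<mu>') a"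
proof (rule ccontr)
  define f where "f = sel \<mu>"
  define f' where "f' = sel \<mu>'"
  have fM: "f \<in> M \<mu>" and fM': "f' \<in> M \<mu>'" unfolding f_def f'_def using sel_prop(1) dm dm' by auto
  have fF: "f \<in> F \<mu>" and fF': "f' \<in> F \<mu>'" using fM fM' unfolding M_def by auto
  define x where "x = load H S f"
  define x' where "x' = load H S f'"
  have x0: "\<And>r. x r \<ge> 0" "\<And>r. x' r \<ge> 0" unfolding x_def x'_def using load_nonneg fF fF' by auto
  assume "\<not> load H S (sel \<mu>) a \<le> load H S (sel \<mu>') a"
  then have alt: "x' a < x a" unfolding x_def x'_def f_def f'_def by simp
  obtain b where b: "b \<in> R" "x b < x' b"
    "(a,b) \<in> {(p,q). \<exists>k\<in>H. {p} \<in> S k \<and> {q} \<in> S k \<and> f' k {p} < f k {p} \<and> f k {q} < f' k {q}}\<^sup>*"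
    using reach[OF fF fF' hle aR alt[unfolded x_def x'_def]] unfolding x_def x'_def by blast
  have ab: "a \<noteq> b" using alt b(2) by auto
  have ch: "c a (x a) \<le> c b (x b)" "c b (x' b) \<le> c a (x' a)"
    using chain[OF fM fM' b(3)] unfolding x_def x'_def by auto
  obtain d :: "'h \<Rightarrow> 'r set \<Rightarrow> real" where d: "\<forall>k\<in>H. (\<Sum>s\<in>S k. d k s) = 0"
    "\<forall>r. (\<Sum>k\<in>H. if {r} \<in> S k then d k {r} else 0) = (if r = b then 1 else 0) - (if r = a then 1 else 0)"
    "\<forall>k s. d k s < 0 \<longrightarrow> (k,s) \<in> A \<and> f' k s < f k s"
    "\<forall>k s. d k s > 0 \<longrightarrow> (k,s) \<in> A \<and> f k s < f' k s"
    using pert[OF b(3)] by blast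
  define gap1 where "gap1 = x a - x' a"
  define gap2 where "gap2 = x' b - x b"
  have gp: "gap1 > 0" "gap2 > 0" unfolding gap1_def gap2_def using alt b(2) by auto
  define ratio where "ratio k s = (if d k s < 0 then f k s / (- d k s) else if d k s > 0 then f' k s / d k s else 1)" for k s
  define Q where "Q = {gap1, gap2} \<union> (\<lambda>p. ratio (fst p) (snd p)) ` A"
  have finQ: "finite Q" unfolding Q_def using finA by simp
  have Qne: "Q \<noteq> {}" unfolding Q_def by simp
  have ratio_pos: "ratio k s > 0" for k s
  proof -
    have "f k s \<ge> 0" "f' k s \<ge> 0" using F_nonneg fF fF' by auto
    moreover have "d k s < 0 \<Longrightarrow> f k s > 0" "d k s > 0 \<Longrightarrow> f' k s > 0"
      using d(3,4) calculation by force+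
    ultimately show ?thesis unfolding ratio_def
      by (auto intro!: divide_pos_pos divide_pos_neg)
  qed
  have Qpos: "\<forall>q\<in>Q. q > 0" unfolding Q_def using gp ratio_pos by auto
  define t where "t = Min Q / 2"
  have t0: "t > 0" unfolding t_def using Qpos finQ Qne by simp
  have tq: "t \<le> q / 2" if "q \<in> Q" for q unfolding t_def using Min_le[OF finQ that] by simp
  have t1: "t \<le> gap1 / 2" and t2: "t \<le> gap2 / 2" using tq unfolding Q_def by auto
  have tr: "t \<le> ratio k s" if "(k,s) \<in> A" for k s
    using tq[of "ratio k s"] ratio_pos[of k s] that unfolding Q_def by force
  have dA: "\<And>k s. d k s \<noteq> 0 \<Longrightarrow> (k,s) \<in> A" using d(3,4) by (meson linorder_neqE_linordered_idom)
  have nn1: "f k s + t * d k s \<ge> 0" if "(k,s) \<in> A" for k s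
  proof (cases "d k s < 0")
    case True
    then have "t \<le> f k s / (- d k s)" using tr[OF that] unfolding ratio_def by simp
    moreover have "0 < - d k s" using True by simp
    ultimately have "t * (- d k s) \<le> f k s" using pos_le_divide_eq by blast
    then show ?thesis by simp
  next
    case False then show ?thesis using F_nonneg[OF fF, of k s] t0 by simp
  qed
  have nn2: "f' k s + (- t) * d k s \<ge> 0" if "(k,s) \<in> A" for k s
  proof (cases "d k s > 0")
    case True
    then have "t \<le> f' k s / d k s" using tr[OF that] unfolding ratio_def by simp
    then have "t * d k s \<le> f' k s" using True pos_le_divide_eq by blast
    then show ?thesis by simp
  next
    case False
    then have "(- t) * d k s \<ge> 0" using t0 by (intro mult_nonpos_nonpos) auto
    then show ?thesis using F_nonneg[OF fF', of k s] by linarith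
  qed
  define g where "g = (\<lambda>k s. f k s + t * d k s)"
  define g' where "g' = (\<lambda>k s. f' k s + (- t) * d k s)"
  have gF: "g \<in> F \<mu>" unfolding g_def by (rule perturb_F[OF fF]) (use d(1) dA nn1 in auto)
  have gF': "g' \<in> F \<mu>'" unfolding g'_def by (rule perturb_F[OF fF']) (use d(1) dA nn2 in auto)
  have ldg: "load H S g \<rho> = x \<rho> + t * ((if \<rho> = b then 1 else 0) - (if \<rho> = a then 1 else 0))" for \<rho>
    unfolding g_def x_def by (rule load_perturb) (use d(2) in auto)
  have ldg': "load H S g' \<rho> = x' \<rho> + (- t) * ((if \<rho> = b then 1 else 0) - (if \<rho> = a then 1 else 0))" for \<rho>
    unfolding g'_def x'_def by (rule load_perturb) (use d(2) in auto)
  have Phig: "Phi g = Phi f + (P a (x a - t) - P a (x a)) + (P b (x b + t) - P b (x b))"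
    unfolding Phi_def ldg x_def by (rule sum_two[OF aR b(1) ab])
  have Phig': "Phi g' = Phi f' + (P a (x' a - (- t)) - P a (x' a)) + (P b (x' b + (- t)) - P b (x' b))"
    unfolding Phi_def ldg' x'_def by (rule sum_two[OF aR b(1) ab])
  have Nrmg: "Nrm g = Nrm f + ((x a - t)^2 - (x a)^2) + ((x b + t)^2 - (x b)^2)"
    unfolding Nrm_def ldg x_def by (rule sum_two[OF aR b(1) ab])
  have Nrmg': "Nrm g' = Nrm f' + ((x' a - (- t))^2 - (x' a)^2) + ((x' b + (- t))^2 - (x' b)^2)"
    unfolding Nrm_def ldg' x'_def by (rule sum_two[OF aR b(1) ab])
  have x0ab: "x a \<ge> 0" "x' a \<ge> 0" "x b \<ge> 0" "x' b \<ge> 0" using x0 by auto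
  note pb1 = pot_bounds(1)[OF cont mono, unfolded P_def[symmetric]]
  note pb2 = pot_bounds(2)[OF cont mono, unfolded P_def[symmetric]]
  have xat: "x' a \<le> x a - t" "x' a + t \<le> x a" "x b + t \<le> x' b" "x b \<le> x' b - t"
    using t1 t2 gp unfolding gap1_def gap2_def by auto
  have B1: "(x a - (x a - t)) * c a (x a - t) \<le> P a (x a) - P a (x a - t)"
    by (rule pb1[OF aR aR]) (use xat x0ab t0 in auto)
  have B2: "c a (x' a) \<le> c a (x a - t)"
    by (rule mono_onD[OF mono[OF aR]]) (use xat x0ab in auto)
  have B3: "P b (x b + t) - P b (x b) \<le> (x b + t - x b) * c b (x b + t)"
    by (rule pb2[OF b(1) b(1)]) (use x0ab t0 in auto)
  have B4: "c b (x b + t) \<le> c b (x' b)"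
    by (rule mono_onD[OF mono[OF b(1)]]) (use xat x0ab t0 in auto)
  have B1': "t * c a (x a - t) \<le> P a (x a) - P a (x a - t)" using B1 by simp
  have B3': "P b (x b + t) - P b (x b) \<le> t * c b (x b + t)" using B3 by simp
  have m1: "t * c a (x' a) \<le> t * c a (x a - t)" using B2 t0 by simp
  have m2: "t * c b (x b + t) \<le> t * c b (x' b)" using B4 t0 by simp
  have "Phi g \<le> Phi f + t * (c b (x' b) - c a (x' a))"
    unfolding right_diff_distrib using Phig B1' B3' m1 m2 by linarith
  also have "\<dots> \<le> Phi f" using ch(2) t0 by (simp add: mult_nonneg_nonpos)
  finally have gM: "g \<in> M \<mu>" using gF fM unfolding M_def by force
  have B5: "P a (x' a + t) - P a (x' a) \<le> (x' a + t - x' a) * c a (x' a + t)"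
    by (rule pb2[OF aR aR]) (use x0ab t0 in auto)
  have B6: "c a (x' a + t) \<le> c a (x a)"
    by (rule mono_onD[OF mono[OF aR]]) (use xat x0ab t0 in auto)
  have B7: "(x' b - (x' b - t)) * c b (x' b - t) \<le> P b (x' b) - P b (x' b - t)"
    by (rule pb1[OF b(1) b(1)]) (use xat x0ab t0 in auto)
  have B8: "c b (x b) \<le> c b (x' b - t)"
    by (rule mono_onD[OF mono[OF b(1)]]) (use xat x0ab in auto)
  have B5': "P a (x' a + t) - P a (x' a) \<le> t * c a (x' a + t)" using B5 by simp
  have B7': "t * c b (x' b - t) \<le> P b (x' b) - P b (x' b - t)" using B7 by simp
  have m3: "t * c a (x' a + t) \<le> t * c a (x a)" using B6 t0 by simp
  have m4: "t * c b (x b) \<le> t * c b (x' b - t)" using B8 t0 by simp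
  have Phig'': "Phi g' = Phi f' + (P a (x' a + t) - P a (x' a)) + (P b (x' b - t) - P b (x' b))"
    using Phig' by simp
  have "Phi g' \<le> Phi f' + t * (c a (x a) - c b (x b))"
    unfolding right_diff_distrib using Phig'' B5' B7' m3 m4 by linarith
  also have "\<dots> \<le> Phi f'" using ch(1) t0 by (simp add: mult_nonneg_nonpos)
  finally have gM': "g' \<in> M \<mu>'" using gF' fM' unfolding M_def by force
  have N1: "Nrm f \<le> Nrm g" using sel_prop(2)[OF dm gM] unfolding f_def .
  have N2: "Nrm f' \<le> Nrm g'" using sel_prop(2)[OF dm' gM'] unfolding f'_def .
  have "0 \<le> t * (2 * x b - 2 * x a + 2 * t)"
    using N1 Nrmg by (simp add: power2_eq_square algebra_simps)
  moreover have "0 \<le> t * (2 * x' a - 2 * x' b + 2 * t)"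
    using N2 Nrmg' by (simp add: power2_eq_square algebra_simps)
  ultimately have "0 \<le> t * (2 * x b - 2 * x a + 2 * t) + t * (2 * x' a - 2 * x' b + 2 * t)"
    by linarith
  then have "0 \<le> t * (2 * x b - 2 * x a + 2 * t + (2 * x' a - 2 * x' b + 2 * t))"
    by (simp only: distrib_left)
  then have "0 \<le> 2 * x b - 2 * x a + 2 * t + (2 * x' a - 2 * x' b + 2 * t)"
    using t0 by (simp add: zero_le_mult_iff)
  moreover have "2 * t \<le> x a - x' a" "2 * t \<le> x' b - x b" using t1 t2 unfolding gap1_def gap2_def by simp_all
  ultimately show False using gp unfolding gap1_def gap2_def by linarith
qed

end

theorem theorem3p1:
  fixes R :: "'r set" and H :: "'h set" and c :: "'r \<Rightarrow> real \<Rightarrow> real"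
    and S :: "'h \<Rightarrow> 'r set set"
  assumes "congestion_game_structure R c H S"
    and "singleton_game H S"
  shows "\<exists>x. monotone_equilibrium_selection R c H S x"
proof -
  interpret sg R c H S by unfold_locales (rule assms)+
  show ?thesis
    unfolding monotone_equilibrium_selection_def
  proof (intro exI[of _ "\<lambda>\<mu> r. load H S (sel \<mu>) r"] conjI ballI allI impI)
    fix \<mu> assume dm: "\<mu> \<in> demands H"
    show "equilibrium_load R c H S \<mu> (load H S (sel \<mu>))"
      unfolding equilibrium_load_def using M_wardrop[OF sel_prop(1)[OF dm]] by blast
  next
    fix \<mu> h t r assume dm: "\<mu> \<in> demands H" and h: "h \<in> H" and le: "\<mu> h \<le> t" and r: "r \<in> R"
    have dm': "\<mu>(h := t) \<in> demands H"
      using dm h le unfolding demands_def by auto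
    show "load H S (sel \<mu>) r \<le> load H S (sel (\<mu>(h := t))) r"
      by (rule sel_mono[OF dm dm' _ r]) (use le in auto)
  qed
qed

end
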